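(* Let $p\ge0$, $\Omega>0$, $S\in\mathcal B_\Omega$, $x\in[0,\pi]$. Then the operator $\tilde Q(x)T^{-1}$ maps $m$ into $l_2$, and for every $f\in m$, $$\|\tilde Q(x)T^{-1}f\|_{l_2}\le C\|f\|_m,$$ where $C$ depends only on $p$ and $\Omega$.
   Context: $\mathcal S_p$: collections $S=\{\lambda_n,\alpha_n\}_{n\ge1}$ of complex numbers with $\rho_n:=\sqrt{\lambda_n}$ ($\arg\rho_n\in[-\pi/2,\pi/2)$), $\rho_n=n-p-1+\varkappa_n$, $\alpha_n=2/\pi+\kappa_n$, $\{\varkappa_n\},\{\kappa_n\}\in l_2$. Model data: $\tilde\rho_n=0$ for $n\le p+1$, $\tilde\rho_n=n-p-1$ for $n\ge p+1$, $\tilde\lambda_n=\tilde\rho_n^2$; $\tilde\alpha_1=1/\pi$, $\tilde\alpha_n=0$ for $2\le n\le p+1$, $\tilde\alpha_n=2/\pi$ for $n\ge p+2$. $\xi_n=|\rho_n-\tilde\rho_n|+|\alpha_n-\tilde\alpha_n|$, $\mathcal B_\Omega=\{S\in\mathcal S_p:(\sum\xi_n^2)^{1/2}\le\Omega\}$. Notation: $\lambda_{n0}=\lambda_n,\rho_{n0}=\rho_n,\alpha_{n0}=\alpha_n$, $\lambda_{n1}=\tilde\lambda_n,\rho_{n1}=\tilde\rho_n,\alpha_{n1}=\tilde\alpha_n$, $\hat\rho_n=\rho_n-\tilde\rho_n$; $\tilde D(x,\lambda,\mu)=\int_0^x\cos(\sqrt\lambda t)\cos(\sqrt\mu t)dt$;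 $\tilde Q_{ni,kj}(x)=\alpha_{kj}\tilde D(x,\rho_{ni}^2,\rho_{kj}^2)$; $\tilde Q_{nk}=\begin{pmatrix}\tilde Q_{n0,k0}&-\tilde Q_{n0,k1}\\ \tilde Q_{n1,k0}&-\tilde Q_{n1,k1}\end{pmatrix}$; $T_k^{-1}=\begin{pmatrix}\hat\rho_k&1\\0&1\end{pmatrix}$. $m$: Banach space of bounded sequences $f=(f_{ni})_{n\ge1,i=0,1}$ with $\|f\|_m=\sup|f_{ni}|$; $l_2$ is the space of square-summable sequences indexed by $(n,i)$. For $f\in m$, $(T^{-1}f)_n=T_n^{-1}f_n=(\hat\rho_nf_{n0}+f_{n1},f_{n1})^T$ and $(\tilde Q(x)T^{-1}f)_n=\sum_{k\ge1}\tilde Q_{nk}(x)T_k^{-1}f_k$, $f_k=(f_{k0},f_{k1})^T$. *)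

theory Defs
  imports "HOL-Analysis.Analysis"
begin

text \<open>Sequences are indexed by n \<ge> 1 (the value at index 0 is ignored);
  the component index i (or j) ranges over {0,1}.\<close>

text \<open>Square root with arg in [-pi/2, pi/2).\<close>
definition sqrt_branch :: "complex \<Rightarrow> complex" where
  "sqrt_branch z = (if Re (csqrt z) = 0 \<and> Im (csqrt z) > 0 then - csqrt z else csqrt z)"

definition rho :: "(nat \<Rightarrow> complex) \<Rightarrow> nat \<Rightarrow> complex" where
  "rho lam n = sqrt_branch (lam n)"

definition in_Sp :: "nat \<Rightarrow> (nat \<Rightarrow> complex) \<Rightarrow> (nat \<Rightarrow> complex) \<Rightarrow> bool" where
  "in_Sp p lam al \<longleftrightarrow>
     (\<exists>vk kp :: nat \<Rightarrow> complex.
        (\<forall>n\<ge>1. rho lam n = of_int (int n - int p - 1) + vk n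
              \<and> al n = complex_of_real (2 / pi) + kp n)
        \<and> summable (\<lambda>n. (cmod (vk (Suc n)))\<^sup>2)
        \<and> summable (\<lambda>n. (cmod (kp (Suc n)))\<^sup>2))"

definition rho_t :: "nat \<Rightarrow> nat \<Rightarrow> real" where
  "rho_t p n = real (n - p - 1)"

definition alpha_t :: "nat \<Rightarrow> nat \<Rightarrow> real" where
  "alpha_t p n = (if n = 1 then 1 / pi else if n \<le> p + 1 then 0 else 2 / pi)"

definition xi :: "nat \<Rightarrow> (nat \<Rightarrow> complex) \<Rightarrow> (nat \<Rightarrow> complex) \<Rightarrow> nat \<Rightarrow> real" where
  "xi p lam al n = cmod (rho lam n - of_real (rho_t p n)) + cmod (al n - of_real (alpha_t p n))"

definition in_B :: "nat \<Rightarrow> real \<Rightarrow> (nat \<Rightarrow> complex) \<Rightarrow> (nat \<Rightarrow> complex) \<Rightarrow> bool" where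
  "in_B p \<Omega> lam al \<longleftrightarrow> in_Sp p lam al
     \<and> summable (\<lambda>n. (xi p lam al (Suc n))\<^sup>2)
     \<and> sqrt (\<Sum>n. (xi p lam al (Suc n))\<^sup>2) \<le> \<Omega>"

text \<open>lambda_{nj}, rho_{nj}, alpha_{nj}: j = 0 original data, j = 1 model data.\<close>
definition lamj :: "nat \<Rightarrow> (nat \<Rightarrow> complex) \<Rightarrow> nat \<Rightarrow> nat \<Rightarrow> complex" where
  "lamj p lam n j = (if j = 0 then lam n else of_real ((rho_t p n)\<^sup>2))"

definition alj :: "nat \<Rightarrow> (nat \<Rightarrow> complex) \<Rightarrow> nat \<Rightarrow> nat \<Rightarrow> complex" where
  "alj p al n j = (if j = 0 then al n else of_real (alpha_t p n))"

definition rho_hat :: "nat \<Rightarrow> (nat \<Rightarrow> complex) \<Rightarrow> nat \<Rightarrow> complex" where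
  "rho_hat p lam n = rho lam n - of_real (rho_t p n)"

definition Dt :: "real \<Rightarrow> complex \<Rightarrow> complex \<Rightarrow> complex" where
  "Dt x l m = integral {0..x}
      (\<lambda>t. cos (csqrt l * of_real t) * cos (csqrt m * of_real t))"

definition Qt :: "nat \<Rightarrow> (nat \<Rightarrow> complex) \<Rightarrow> (nat \<Rightarrow> complex) \<Rightarrow> real
                   \<Rightarrow> nat \<Rightarrow> nat \<Rightarrow> nat \<Rightarrow> nat \<Rightarrow> complex" where
  "Qt p lam al x n i k j = alj p al k j * Dt x (lamj p lam n i) (lamj p lam k j)"

text \<open>k-th term of the n,i component of Q(x) T^{-1} f, i.e. the i-th row of
  Q_{nk}(x) T_k^{-1} f_k.\<close>
definition QT_term :: "nat \<Rightarrow> (nat \<Rightarrow> complex) \<Rightarrow> (nat \<Rightarrow> complex) \<Rightarrow> real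
                   \<Rightarrow> (nat \<Rightarrow> nat \<Rightarrow> complex) \<Rightarrow> nat \<Rightarrow> nat \<Rightarrow> nat \<Rightarrow> complex" where
  "QT_term p lam al x f n i k =
     Qt p lam al x n i k 0 * (rho_hat p lam k * f k 0 + f k 1) - Qt p lam al x n i k 1 * f k 1"

definition QT :: "nat \<Rightarrow> (nat \<Rightarrow> complex) \<Rightarrow> (nat \<Rightarrow> complex) \<Rightarrow> real
                   \<Rightarrow> (nat \<Rightarrow> nat \<Rightarrow> complex) \<Rightarrow> nat \<Rightarrow> nat \<Rightarrow> complex" where
  "QT p lam al x f n i = (\<Sum>k. QT_term p lam al x f n i (Suc k))"

definition bounded_seq :: "(nat \<Rightarrow> nat \<Rightarrow> complex) \<Rightarrow> bool" where
  "bounded_seq f \<longleftrightarrow> (\<exists>B. \<forall>n\<ge>1. \<forall>i\<in>{0,1}. cmod (f n i) \<le> B)"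

definition norm_m :: "(nat \<Rightarrow> nat \<Rightarrow> complex) \<Rightarrow> real" where
  "norm_m f = (SUP ni \<in> {1..} \<times> {0,1}. cmod (f (fst ni) (snd ni)))"

definition in_l2 :: "(nat \<Rightarrow> nat \<Rightarrow> complex) \<Rightarrow> bool" where
  "in_l2 g \<longleftrightarrow> summable (\<lambda>n. \<Sum>i\<in>{0,1}. (cmod (g (Suc n) i))\<^sup>2)"

definition norm_l2 :: "(nat \<Rightarrow> nat \<Rightarrow> complex) \<Rightarrow> real" where
  "norm_l2 g = sqrt (\<Sum>n. \<Sum>i\<in>{0::nat,1}. (cmod (g (Suc n) i))\<^sup>2)"

end

theory Submission
  imports Defs
begin

lemma cos_sub1_bound: "cmod (cos (b::complex) - 1) \<le> exp \<bar>Im b\<bar> * cmod b"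
  using Taylor_cos[of b 0] by simp
lemma sin_bound: "cmod (sin (b::complex)) \<le> exp \<bar>Im b\<bar> * cmod b"
  using Taylor_sin[of b 0] by simp
lemma cos_sub1_bound2: "cmod (cos (b::complex) - 1) \<le> exp \<bar>Im b\<bar> * cmod b ^ 2"
  using Taylor_cos[of b 1] by (simp add: cos_coeff_def power2_eq_square)
lemma sin_bound2: "cmod (sin (b::complex) - b) \<le> exp \<bar>Im b\<bar> * cmod b ^ 2"
  using Taylor_sin[of b 1] by (simp add: sin_coeff_def power2_eq_square)
lemma cos_le: "cmod (cos (b::complex)) \<le> exp \<bar>Im b\<bar>"
  using cmod_cos_le_exp[of 1 b] by simp

lemma cos_shift1:
  fixes y :: real and b :: complex
  assumes "\<bar>Im b\<bar> \<le> B"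
  shows "cmod (cos (of_real y + b) - cos (of_real y)) \<le> 2 * exp B * cmod b"
proof -
  have eq: "cos (of_real y + b) - cos (of_real y) = cos (of_real y) * (cos b - 1) - sin (of_real y) * sin b"
    by (simp add: cos_add algebra_simps)
  have c1: "cmod (cos (of_real y::complex)) \<le> 1" by (simp only: cos_of_real norm_of_real abs_cos_le_one)
  have s1: "cmod (sin (of_real y::complex)) \<le> 1" by (simp only: sin_of_real norm_of_real abs_sin_le_one)
  have e: "exp \<bar>Im b\<bar> \<le> exp B" using assms by simp
  have a: "cmod (cos b - 1) \<le> exp B * cmod b"
    using cos_sub1_bound[of b] e by (meson mult_right_mono norm_ge_zero order_trans)
  have b': "cmod (sin b) \<le> exp B * cmod b"
    using sin_bound[of b] e by (meson mult_right_mono norm_ge_zero order_trans)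
  have "cmod (cos (of_real y) * (cos b - 1) - sin (of_real y) * sin b)
      \<le> cmod (cos (of_real y::complex)) * cmod (cos b - 1) + cmod (sin (of_real y::complex)) * cmod (sin b)"
    by (metis norm_mult norm_triangle_ineq4)
  also have "\<dots> \<le> 1 * (exp B * cmod b) + 1 * (exp B * cmod b)"
    by (intro add_mono mult_mono c1 s1 a b') auto
  finally show ?thesis using eq by (simp add: mult_ac)
qed

lemma cos_shift2:
  fixes y :: real and b :: complex
  assumes "\<bar>Im b\<bar> \<le> B"
  shows "cmod (cos (of_real y + b) - cos (of_real y) + b * sin (of_real y)) \<le> 2 * exp B * cmod b ^ 2"
proof -
  have eq: "cos (of_real y + b) - cos (of_real y) + b * sin (of_real y)
     = cos (of_real y) * (cos b - 1) - sin (of_real y) * (sin b - b)"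
    by (simp add: cos_add algebra_simps)
  have c1: "cmod (cos (of_real y::complex)) \<le> 1" by (simp only: cos_of_real norm_of_real abs_cos_le_one)
  have s1: "cmod (sin (of_real y::complex)) \<le> 1" by (simp only: sin_of_real norm_of_real abs_sin_le_one)
  have e: "exp \<bar>Im b\<bar> \<le> exp B" using assms by simp
  have a: "cmod (cos b - 1) \<le> exp B * cmod b ^ 2"
    using cos_sub1_bound2[of b] e by (meson mult_right_mono zero_le_power2 order_trans)
  have b': "cmod (sin b - b) \<le> exp B * cmod b ^ 2"
    using sin_bound2[of b] e by (meson mult_right_mono zero_le_power2 order_trans)
  have "cmod (cos (of_real y) * (cos b - 1) - sin (of_real y) * (sin b - b))
      \<le> cmod (cos (of_real y::complex)) * cmod (cos b - 1) + cmod (sin (of_real y::complex)) * cmod (sin b - b)"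
    by (metis norm_mult norm_triangle_ineq4)
  also have "\<dots> \<le> 1 * (exp B * cmod b ^ 2) + 1 * (exp B * cmod b ^ 2)"
    by (intro add_mono mult_mono c1 s1 a b') auto
  finally show ?thesis using eq by simp
qed

lemma int_cos:
  fixes j :: int assumes "j \<noteq> 0"
  shows "((\<lambda>t. cos (real_of_int j * t)) has_integral 0) {0..pi}"
proof -
  have "((\<lambda>t. cos (real_of_int j * t)) has_integral (sin (real_of_int j * pi) / j - sin (real_of_int j * 0) / j)) {0..pi}"
  proof (rule fundamental_theorem_of_calculus)
    fix t assume "t \<in> {0..pi}"
    show "((\<lambda>t. sin (real_of_int j * t) / j) has_vector_derivative cos (real_of_int j * t)) (at t within {0..pi})"
      using assms
      by (auto intro!: derivative_eq_intros simp: has_real_derivative_iff_has_vector_derivative[symmetric])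
  qed simp
  moreover have "sin (real_of_int j * pi) = 0" by (simp add: sin_zero_iff_int2)
  ultimately show ?thesis by simp
qed

lemma orth_cos:
  fixes m m' :: nat assumes "m \<noteq> m'"
  shows "integral {0..pi} (\<lambda>t. cos (real m * t) * cos (real m' * t)) = 0"
proof -
  have eq: "\<And>t. cos (real m * t) * cos (real m' * t)
     = cos (real_of_int (int m - int m') * t) / 2 + cos (real_of_int (int m + int m') * t) / 2"
    by (simp add: cos_times_cos algebra_simps add_divide_distrib)
  have "((\<lambda>t. cos (real_of_int (int m - int m') * t) / 2 + cos (real_of_int (int m + int m') * t) / 2) has_integral (0/2 + 0/2)) {0..pi}"
    using assms by (intro has_integral_add has_integral_divide int_cos) auto
  then show ?thesis unfolding eq by (simp add: integral_unique)
qed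

lemma orth_sin:
  fixes m m' :: nat assumes "m \<noteq> m'"
  shows "integral {0..pi} (\<lambda>t. sin (real m * t) * sin (real m' * t)) = 0"
proof -
  have eq: "\<And>t. sin (real m * t) * sin (real m' * t)
     = cos (real_of_int (int m - int m') * t) / 2 - cos (real_of_int (int m + int m') * t) / 2"
    by (simp add: sin_times_sin algebra_simps diff_divide_distrib)
  have "((\<lambda>t. cos (real_of_int (int m - int m') * t) / 2 - cos (real_of_int (int m + int m') * t) / 2) has_integral (0/2 - 0/2)) {0..pi}"
    using assms by (intro has_integral_diff has_integral_divide int_cos) auto
  then show ?thesis unfolding eq by (simp add: integral_unique)
qed



locale orthsys =
  fixes e :: "nat \<Rightarrow> real \<Rightarrow> real"
  assumes cont: "\<And>m. continuous_on UNIV (e m)"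
    and bnd: "\<And>m t. \<bar>e m t\<bar> \<le> 1"
    and orth: "\<And>m m'. m \<noteq> m' \<Longrightarrow> integral {0..pi} (\<lambda>t. e m t * e m' t) = 0"
begin

lemma int_e: "(\<lambda>t. e m t * e m' t) integrable_on {a..b}"
  by (intro integrable_continuous_interval continuous_intros continuous_on_subset[OF cont]) auto

lemma sq_le: "integral {0..pi} (\<lambda>t. e m t * e m t) \<le> pi"
proof -
  have "integral {0..pi} (\<lambda>t. e m t * e m t) \<le> integral {0..pi} (\<lambda>t. 1::real)"
  proof (rule integral_le[OF int_e])
    show "(\<lambda>t. 1::real) integrable_on {0..pi}" by (intro integrable_continuous_interval continuous_intros)
    fix t show "e m t * e m t \<le> 1"
      using bnd[of m t] by (metis abs_le_square_iff abs_one power2_eq_square one_power2)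
  qed
  then show ?thesis by simp
qed

lemma parseval_le:
  fixes \<phi> :: "'k \<Rightarrow> nat" and a :: "'k \<Rightarrow> real"
  assumes "finite K" "inj_on \<phi> K"
  shows "integral {0..pi} (\<lambda>t. (\<Sum>k\<in>K. a k * e (\<phi> k) t)^2) \<le> pi * (\<Sum>k\<in>K. (a k)^2)"
proof -
  have sq: "\<And>t. (\<Sum>k\<in>K. a k * e (\<phi> k) t)^2 = (\<Sum>k\<in>K. \<Sum>k'\<in>K. a k * a k' * (e (\<phi> k) t * e (\<phi> k') t))"
    by (simp add: power2_eq_square sum_product mult_ac)
  have "integral {0..pi} (\<lambda>t. (\<Sum>k\<in>K. a k * e (\<phi> k) t)^2)
      = (\<Sum>k\<in>K. \<Sum>k'\<in>K. a k * a k' * integral {0..pi} (\<lambda>t. e (\<phi> k) t * e (\<phi> k') t))"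
    unfolding sq
  proof (subst integral_sum)
    show "finite K" by fact
    show "\<And>k. k \<in> K \<Longrightarrow> (\<lambda>t. \<Sum>k'\<in>K. a k * a k' * (e (\<phi> k) t * e (\<phi> k') t)) integrable_on {0..pi}"
      by (intro integrable_continuous_interval continuous_intros continuous_on_subset[OF cont]) auto
    show "(\<Sum>k\<in>K. integral {0..pi} (\<lambda>t. \<Sum>k'\<in>K. a k * a k' * (e (\<phi> k) t * e (\<phi> k') t))) =
      (\<Sum>k\<in>K. \<Sum>k'\<in>K. a k * a k' * integral {0..pi} (\<lambda>t. e (\<phi> k) t * e (\<phi> k') t))"
    proof (intro sum.cong refl)
      fix k assume "k \<in> K"
      show "integral {0..pi} (\<lambda>t. \<Sum>k'\<in>K. a k * a k' * (e (\<phi> k) t * e (\<phi> k') t)) =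
         (\<Sum>k'\<in>K. a k * a k' * integral {0..pi} (\<lambda>t. e (\<phi> k) t * e (\<phi> k') t))"
        by (subst integral_sum) (auto intro!: integrable_continuous_interval continuous_intros continuous_on_subset[OF cont] assms(1))
    qed
  qed
  also have "\<dots> = (\<Sum>k\<in>K. \<Sum>k'\<in>K. if k' = k then (a k)^2 * integral {0..pi} (\<lambda>t. e (\<phi> k) t * e (\<phi> k) t) else 0)"
  proof (intro sum.cong refl)
    fix k k' assume "k \<in> K" "k' \<in> K"
    then show "a k * a k' * integral {0..pi} (\<lambda>t. e (\<phi> k) t * e (\<phi> k') t)
       = (if k' = k then (a k)^2 * integral {0..pi} (\<lambda>t. e (\<phi> k) t * e (\<phi> k) t) else 0)"
      using assms(2) orth[of "\<phi> k" "\<phi> k'"] by (auto simp: power2_eq_square inj_on_def)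
  qed
  also have "\<dots> = (\<Sum>k\<in>K. (a k)^2 * integral {0..pi} (\<lambda>t. e (\<phi> k) t * e (\<phi> k) t))"
    using assms(1) by simp
  also have "\<dots> \<le> (\<Sum>k\<in>K. (a k)^2 * pi)"
    by (intro sum_mono mult_left_mono sq_le) auto
  finally show ?thesis by (simp add: sum_distrib_left mult_ac)
qed

lemma bessel:
  fixes u :: "real \<Rightarrow> real"
  assumes x: "0 \<le> x" "x \<le> pi" and u: "continuous_on {0..x} u" and M: "finite M"
  shows "(\<Sum>m\<in>M. (integral {0..x} (\<lambda>t. u t * e m t))^2) \<le> pi * integral {0..x} (\<lambda>t. (u t)^2)"
proof -
  define A where "A m = integral {0..x} (\<lambda>t. u t * e m t)" for m
  define g where "g t = (\<Sum>m\<in>M. A m * e m t)" for t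
  define S where "S = (\<Sum>m\<in>M. (A m)^2)"
  have contg: "continuous_on UNIV g" unfolding g_def
    by (intro continuous_intros cont)
  have iue: "(\<lambda>t. u t * e m t) integrable_on {0..x}" for m
    by (intro integrable_continuous_interval continuous_intros u continuous_on_subset[OF cont]) auto
  have ug: "integral {0..x} (\<lambda>t. u t * g t) = S"
  proof -
    have "integral {0..x} (\<lambda>t. u t * g t) = integral {0..x} (\<lambda>t. \<Sum>m\<in>M. A m * (u t * e m t))"
      unfolding g_def by (simp add: sum_distrib_left mult_ac)
    also have "\<dots> = (\<Sum>m\<in>M. A m * A m)"
      by (subst integral_sum) (auto intro!: integrable_continuous_interval continuous_intros u continuous_on_subset[OF cont] M simp: A_def)
    finally show ?thesis by (simp add: S_def power2_eq_square)
  qed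
  have gg: "integral {0..x} (\<lambda>t. (g t)^2) \<le> pi * S"
  proof -
    have "integral {0..x} (\<lambda>t. (g t)^2) \<le> integral {0..pi} (\<lambda>t. (g t)^2)"
      by (rule integral_subset_le) (use x in \<open>auto intro!: integrable_continuous_interval continuous_intros continuous_on_subset[OF contg]\<close>)
    also have "\<dots> \<le> pi * S"
      unfolding g_def S_def using parseval_le[of M "\<lambda>m. m" A] M by simp
    finally show ?thesis .
  qed
  have "0 \<le> integral {0..x} (\<lambda>t. (u t - g t / pi)^2)"
    by (rule integral_nonneg) (auto intro!: integrable_continuous_interval continuous_intros u continuous_on_subset[OF contg])
  also have "\<dots> = integral {0..x} (\<lambda>t. (u t)^2) - 2 / pi * integral {0..x} (\<lambda>t. u t * g t)
        + integral {0..x} (\<lambda>t. (g t)^2) / pi^2"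
  proof -
    have eq: "\<And>t. (u t - g t / pi)^2 = (u t)^2 - 2 / pi * (u t * g t) + (g t)^2 / pi^2"
      by (simp add: power2_eq_square field_simps)
    have i1: "(\<lambda>t. (u t)^2) integrable_on {0..x}"
      by (intro integrable_continuous_interval continuous_intros u)
    have i2: "(\<lambda>t. u t * g t) integrable_on {0..x}"
      by (intro integrable_continuous_interval continuous_intros u continuous_on_subset[OF contg]) auto
    have i3: "(\<lambda>t. (g t)^2) integrable_on {0..x}"
      by (intro integrable_continuous_interval continuous_intros continuous_on_subset[OF contg]) auto
    show ?thesis unfolding eq
      using i1 i2 i3 by (simp add: integral_add integral_diff integral_mult_right integral_divide integrable_diff integrable_add integrable_on_cmult_left integrable_on_divide)
  qed
  also have "\<dots> \<le> integral {0..x} (\<lambda>t. (u t)^2) - 2 / pi * S + pi * S / pi^2"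
    unfolding ug by (intro add_mono divide_right_mono gg) auto
  finally have "0 \<le> integral {0..x} (\<lambda>t. (u t)^2) - S / pi"
    by (simp add: power2_eq_square field_simps)
  then show ?thesis unfolding S_def A_def by (simp add: field_simps)
qed

end

interpretation cosys: orthsys "\<lambda>m t. cos (real m * t)"
  by unfold_locales (auto intro!: continuous_intros orth_cos)
interpretation sinsys: orthsys "\<lambda>m t. sin (real m * t)"
  by unfold_locales (auto intro!: continuous_intros orth_sin)



context orthsys begin
lemma parseval_c:
  fixes \<phi> :: "'k \<Rightarrow> nat" and b :: "'k \<Rightarrow> complex"
  assumes "finite K" "inj_on \<phi> K"
  shows "integral {0..pi} (\<lambda>t. (cmod (\<Sum>k\<in>K. b k * of_real (e (\<phi> k) t)))^2) \<le> pi * (\<Sum>k\<in>K. (cmod (b k))^2)"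
proof -
  have eq: "(cmod (\<Sum>k\<in>K. b k * of_real (e (\<phi> k) t)))^2
     = (\<Sum>k\<in>K. Re (b k) * e (\<phi> k) t)^2 + (\<Sum>k\<in>K. Im (b k) * e (\<phi> k) t)^2" for t
    by (simp add: cmod_power2 Re_sum Im_sum)
  have i: "(\<lambda>t. (\<Sum>k\<in>K. c k * e (\<phi> k) t)^2) integrable_on {0..pi}" for c
    by (intro integrable_continuous_interval continuous_intros continuous_on_subset[OF cont]) auto
  have "integral {0..pi} (\<lambda>t. (cmod (\<Sum>k\<in>K. b k * of_real (e (\<phi> k) t)))^2)
     = integral {0..pi} (\<lambda>t. (\<Sum>k\<in>K. Re (b k) * e (\<phi> k) t)^2) + integral {0..pi} (\<lambda>t. (\<Sum>k\<in>K. Im (b k) * e (\<phi> k) t)^2)"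
    unfolding eq by (rule integral_add[OF i i])
  also have "\<dots> \<le> pi * (\<Sum>k\<in>K. (Re (b k))^2) + pi * (\<Sum>k\<in>K. (Im (b k))^2)"
    by (intro add_mono parseval_le assms)
  finally show ?thesis by (simp add: cmod_power2 sum.distrib distrib_left)
qed

lemma bessel_c:
  fixes G :: "real \<Rightarrow> complex"
  assumes x: "0 \<le> x" "x \<le> pi" and G: "continuous_on {0..x} G" and M: "finite M"
  shows "(\<Sum>m\<in>M. (cmod (integral {0..x} (\<lambda>t. of_real (e m t) * G t)))^2) \<le> pi * integral {0..x} (\<lambda>t. (cmod (G t))^2)"
proof -
  have ReI: "Re (integral {0..x} (\<lambda>t. of_real (e m t) * G t)) = integral {0..x} (\<lambda>t. Re (G t) * e m t)"
   and ImI: "Im (integral {0..x} (\<lambda>t. of_real (e m t) * G t)) = integral {0..x} (\<lambda>t. Im (G t) * e m t)" for m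
  proof -
    have "(\<lambda>t. of_real (e m t) * G t) integrable_on {0..x}"
      by (intro integrable_continuous_interval continuous_intros G continuous_on_subset[OF cont]) auto
    then have h: "((\<lambda>t. of_real (e m t) * G t) has_integral integral {0..x} (\<lambda>t. of_real (e m t) * G t)) {0..x}"
      by (rule integrable_integral)
    show "Re (integral {0..x} (\<lambda>t. of_real (e m t) * G t)) = integral {0..x} (\<lambda>t. Re (G t) * e m t)"
      using has_integral_Re[OF h] by (simp add: integral_unique mult.commute)
    show "Im (integral {0..x} (\<lambda>t. of_real (e m t) * G t)) = integral {0..x} (\<lambda>t. Im (G t) * e m t)"
      using has_integral_Im[OF h] by (simp add: integral_unique mult.commute)
  qed
  have cR: "continuous_on {0..x} (\<lambda>t. Re (G t))" and cI: "continuous_on {0..x} (\<lambda>t. Im (G t))"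
    by (intro continuous_intros G)+
  have "(\<Sum>m\<in>M. (cmod (integral {0..x} (\<lambda>t. of_real (e m t) * G t)))^2)
     = (\<Sum>m\<in>M. (integral {0..x} (\<lambda>t. Re (G t) * e m t))^2) + (\<Sum>m\<in>M. (integral {0..x} (\<lambda>t. Im (G t) * e m t))^2)"
    by (simp add: cmod_power2 ReI ImI sum.distrib)
  also have "\<dots> \<le> pi * integral {0..x} (\<lambda>t. (Re (G t))^2) + pi * integral {0..x} (\<lambda>t. (Im (G t))^2)"
    by (intro add_mono bessel x M cR cI)
  also have "\<dots> = pi * integral {0..x} (\<lambda>t. (cmod (G t))^2)"
  proof -
    have "integral {0..x} (\<lambda>t. (cmod (G t))^2) = integral {0..x} (\<lambda>t. (Re (G t))^2 + (Im (G t))^2)"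
      by (simp add: cmod_power2)
    also have "\<dots> = integral {0..x} (\<lambda>t. (Re (G t))^2) + integral {0..x} (\<lambda>t. (Im (G t))^2)"
      by (intro integral_add integrable_continuous_interval continuous_intros G)
    finally show ?thesis by (simp add: distrib_left)
  qed
  finally show ?thesis .
qed
end

lemma l1_l2:
  fixes v :: "real \<Rightarrow> real"
  assumes x: "0 \<le> x" "x \<le> pi" and v: "continuous_on {0..x} v"
  shows "(integral {0..x} (\<lambda>t. \<bar>v t\<bar>))^2 \<le> pi * integral {0..x} (\<lambda>t. (v t)^2)"
proof -
  have "(\<Sum>m\<in>{0::nat}. (integral {0..x} (\<lambda>t. \<bar>v t\<bar> * cos (real m * t)))^2) \<le> pi * integral {0..x} (\<lambda>t. \<bar>v t\<bar>^2)"
    by (rule cosys.bessel) (auto intro!: continuous_intros v x)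
  then show ?thesis by simp
qed



lemma cos_csqrt: "cos (csqrt l * z) = cos (sqrt_branch l * z)"
  unfolding sqrt_branch_def by simp

lemma csqrt_rt: "csqrt (of_real ((rho_t p k)^2)) = of_real (rho_t p k)"
  by (simp add: csqrt_of_real rho_t_def)

lemma at_le: "\<bar>alpha_t p k\<bar> \<le> 2 / pi"
  unfolding alpha_t_def by (auto simp: field_simps)

lemma sum1: "(\<Sum>k'\<in>{k}. g k') = (g k :: real)" by simp

locale stg =
  fixes p :: nat and \<Omega> :: real and lam al :: "nat \<Rightarrow> complex" and x :: real
    and f :: "nat \<Rightarrow> nat \<Rightarrow> complex"
  assumes Opos: "\<Omega> > 0" and B: "in_B p \<Omega> lam al" and xr: "x \<in> {0..pi}" and fb: "bounded_seq f"
begin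

lemma xi_nn: "0 \<le> xi p lam al k"
  unfolding xi_def by simp

lemma rhat_le: "cmod (rho lam k - of_real (rho_t p k)) \<le> xi p lam al k"
  unfolding xi_def by simp

lemma al_le: "cmod (al k - of_real (alpha_t p k)) \<le> xi p lam al k"
  unfolding xi_def by simp

lemma Psi_le:
  assumes "finite K" "K \<subseteq> {1..}"
  shows "(\<Sum>k\<in>K. (xi p lam al k)^2) \<le> \<Omega>^2"
proof -
  have sm: "summable (\<lambda>n. (xi p lam al (Suc n))\<^sup>2)" and sq: "sqrt (\<Sum>n. (xi p lam al (Suc n))\<^sup>2) \<le> \<Omega>"
    using B unfolding in_B_def by auto
  have nn: "0 \<le> (\<Sum>n. (xi p lam al (Suc n))\<^sup>2)" by (intro suminf_nonneg sm) auto
  have s: "(\<Sum>n. (xi p lam al (Suc n))\<^sup>2) \<le> \<Omega>^2"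
    using sq nn Opos by (metis real_sqrt_le_iff real_sqrt_unique less_eq_real_def)
  define K' where "K' = (\<lambda>k. k - 1) ` K"
  have KK: "K = Suc ` K'" unfolding K'_def using assms(2)
    by (force simp: image_iff)
  have "(\<Sum>k\<in>K. (xi p lam al k)^2) = (\<Sum>k\<in>K'. (xi p lam al (Suc k))^2)"
    unfolding KK by (simp add: sum.reindex)
  also have "\<dots> \<le> (\<Sum>n. (xi p lam al (Suc n))\<^sup>2)"
    by (rule sum_le_suminf[OF sm]) (auto simp: K'_def assms(1))
  finally show ?thesis using s by linarith
qed

lemma xi_le: "k \<ge> 1 \<Longrightarrow> xi p lam al k \<le> \<Omega>"
proof -
  assume k: "k \<ge> 1"
  have "(\<Sum>k'\<in>{k}. (xi p lam al k')^2) \<le> \<Omega>^2" by (rule Psi_le) (use k in auto)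
  moreover have "(\<Sum>k'\<in>{k}. (xi p lam al k')^2) = (xi p lam al k)^2"
    by (rule sum1)
  ultimately have h: "(xi p lam al k)^2 \<le> \<Omega>^2" by linarith
  show ?thesis by (rule power2_le_imp_le[OF h]) (use Opos in simp)
qed

lemma f_le: "k \<ge> 1 \<Longrightarrow> j \<in> {0,1} \<Longrightarrow> cmod (f k j) \<le> norm_m f"
proof -
  assume k: "k \<ge> 1" and j: "j \<in> {0,1}"
  obtain Bd where Bd: "\<forall>n\<ge>1. \<forall>i\<in>{0,1}. cmod (f n i) \<le> Bd" using fb unfolding bounded_seq_def by auto
  have "bdd_above ((\<lambda>ni. cmod (f (fst ni) (snd ni))) ` ({1..} \<times> {0,1}))"
    using Bd by (intro bdd_aboveI[of _ Bd]) auto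
  moreover have "(k, j) \<in> {1..} \<times> {0,1}" using k j by auto
  ultimately show ?thesis unfolding norm_m_def
    by (metis (no_types, lifting) cSUP_upper fst_conv snd_conv)
qed

lemma F_nn: "0 \<le> norm_m f"
proof -
  have "cmod (f 1 0) \<le> norm_m f" by (rule f_le) auto
  then show ?thesis using norm_ge_zero[of "f 1 0"] by linarith
qed

lemma al_bound: "cmod (al k) \<le> 2 / pi + xi p lam al k"
proof -
  have "cmod (al k) \<le> cmod (al k - of_real (alpha_t p k)) + cmod (of_real (alpha_t p k) :: complex)"
    using norm_triangle_ineq[of "al k - of_real (alpha_t p k)" "of_real (alpha_t p k)"] by simp
  then show ?thesis using al_le[of k] at_le[of p k] by simp
qed

lemma Im_r: "\<bar>Im (rho lam k)\<bar> \<le> xi p lam al k"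
proof -
  have "Im (rho lam k) = Im (rho lam k - of_real (rho_t p k))" by simp
  then show ?thesis using abs_Im_le_cmod[of "rho lam k - of_real (rho_t p k)"] rhat_le[of k] by linarith
qed

end


definition cf :: "nat \<Rightarrow> (nat \<Rightarrow> complex) \<Rightarrow> (nat \<Rightarrow> complex) \<Rightarrow> (nat \<Rightarrow> nat \<Rightarrow> complex) \<Rightarrow> nat \<Rightarrow> real \<Rightarrow> complex" where
  "cf p lam al f k t = al k * cos (rho lam k * of_real t) * (rho_hat p lam k * f k 0 + f k 1)
      - of_real (alpha_t p k) * cos (of_real (rho_t p k * t)) * f k 1"

definition sig :: "nat \<Rightarrow> (nat \<Rightarrow> complex) \<Rightarrow> nat \<Rightarrow> nat \<Rightarrow> complex" where
  "sig p lam n i = (if i = 0 then rho lam n else of_real (rho_t p n))"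

definition Gf :: "nat \<Rightarrow> (nat \<Rightarrow> complex) \<Rightarrow> (nat \<Rightarrow> complex) \<Rightarrow> (nat \<Rightarrow> nat \<Rightarrow> complex) \<Rightarrow> nat set \<Rightarrow> real \<Rightarrow> complex" where
  "Gf p lam al f K t = (\<Sum>k\<in>K. cf p lam al f k t)"

lemma cos_lamj: "i \<in> {0,1} \<Longrightarrow> cos (csqrt (lamj p lam n i) * z) = cos (sig p lam n i * z)"
proof -
  assume "i \<in> {0,1}"
  then consider "i = 0" | "i = 1" by auto
  then show ?thesis
  proof cases
    case 1 then show ?thesis by (simp add: lamj_def sig_def cos_csqrt rho_def)
  next
    case 2 then show ?thesis using csqrt_rt[of p n] by (simp add: lamj_def sig_def del: of_real_power)
  qed
qed

lemma cont_cf: "continuous_on A (cf p lam al f k)"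
  unfolding cf_def by (intro continuous_intros)

lemma cont_Gf: "continuous_on A (Gf p lam al f K)"
  unfolding Gf_def by (intro continuous_intros cont_cf)

lemma term_repr:
  assumes i: "i \<in> {0,1}"
  shows "QT_term p lam al x f n i k = integral {0..x} (\<lambda>t. cos (sig p lam n i * of_real t) * cf p lam al f k t)"
proof -
  have D0: "Dt x (lamj p lam n i) (lamj p lam k 0) = integral {0..x} (\<lambda>t. cos (sig p lam n i * of_real t) * cos (rho lam k * of_real t))"
    unfolding Dt_def using cos_lamj[OF i, of p lam n] cos_lamj[of 0 p lam k] by (simp add: sig_def)
  have D1: "Dt x (lamj p lam n i) (lamj p lam k 1) = integral {0..x} (\<lambda>t. cos (sig p lam n i * of_real t) * cos (of_real (rho_t p k * t)))"
    unfolding Dt_def using cos_lamj[OF i, of p lam n] cos_lamj[of 1 p lam k] by (simp add: sig_def)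
  let ?a = "\<lambda>t. al k * (cos (sig p lam n i * of_real t) * cos (rho lam k * of_real t)) * (rho_hat p lam k * f k 0 + f k 1)"
  let ?b = "\<lambda>t. of_real (alpha_t p k) * (cos (sig p lam n i * of_real t) * cos (of_real (rho_t p k * t))) * f k 1"
  have "QT_term p lam al x f n i k = integral {0..x} ?a - integral {0..x} ?b"
    unfolding QT_term_def Qt_def D0 D1 by (simp add: alj_def)
  also have "\<dots> = integral {0..x} (\<lambda>t. ?a t - ?b t)"
    by (rule integral_diff[symmetric]) (intro integrable_continuous_interval continuous_intros)+
  also have "\<dots> = integral {0..x} (\<lambda>t. cos (sig p lam n i * of_real t) * cf p lam al f k t)"
    unfolding cf_def by (simp add: algebra_simps)
  finally show ?thesis .
qed

lemma sum_repr:
  assumes i: "i \<in> {0,1}" and K: "finite K"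
  shows "(\<Sum>k\<in>K. QT_term p lam al x f n i k) = integral {0..x} (\<lambda>t. cos (sig p lam n i * of_real t) * Gf p lam al f K t)"
proof -
  have "(\<Sum>k\<in>K. QT_term p lam al x f n i k) = (\<Sum>k\<in>K. integral {0..x} (\<lambda>t. cos (sig p lam n i * of_real t) * cf p lam al f k t))"
    using term_repr[OF i] by simp
  also have "\<dots> = integral {0..x} (\<lambda>t. \<Sum>k\<in>K. cos (sig p lam n i * of_real t) * cf p lam al f k t)"
    by (rule integral_sum[symmetric]) (auto intro!: K integrable_continuous_interval continuous_intros cont_cf)
  finally show ?thesis by (simp add: Gf_def sum_distrib_left)
qed



context stg begin

definition "EE = exp (\<Omega> * pi)"
definition "AA = 2 / pi + \<Omega>"

lemma EE_pos: "EE > 0" unfolding EE_def by simp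
lemma AA_pos: "AA > 0" unfolding AA_def using Opos by (simp add: pi_gt_zero add_pos_pos)

lemma al_AA: "k \<ge> 1 \<Longrightarrow> cmod (al k) \<le> AA"
  using al_bound[of k] xi_le[of k] unfolding AA_def by linarith

lemma rhat_le': "cmod (rho_hat p lam k) \<le> xi p lam al k"
  unfolding rho_hat_def by (rule rhat_le)

lemma tb: "t \<in> {0..pi} \<Longrightarrow> k \<ge> 1 \<Longrightarrow> cmod (rho_hat p lam k * of_real t) \<le> xi p lam al k * pi"
  unfolding norm_mult using rhat_le'[of k] xi_nn[of k] by (auto intro!: mult_mono)

lemma tb2: "t \<in> {0..pi} \<Longrightarrow> k \<ge> 1 \<Longrightarrow> \<bar>Im (rho_hat p lam k * of_real t)\<bar> \<le> \<Omega> * pi"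
proof -
  assume t: "t \<in> {0..pi}" and k: "k \<ge> 1"
  have "\<bar>Im (rho_hat p lam k * of_real t)\<bar> \<le> cmod (rho_hat p lam k * of_real t)" by (rule abs_Im_le_cmod)
  also have "\<dots> \<le> xi p lam al k * pi" using tb[OF t k] .
  also have "\<dots> \<le> \<Omega> * pi" using xi_le[OF k] by simp
  finally show ?thesis .
qed

lemma rsplit: "rho lam k * of_real t = of_real (rho_t p k * t) + rho_hat p lam k * of_real t"
  unfolding rho_hat_def by (simp add: algebra_simps)

lemma cos_r_le: "t \<in> {0..pi} \<Longrightarrow> k \<ge> 1 \<Longrightarrow> cmod (cos (rho lam k * of_real t)) \<le> EE"
proof -
  assume t: "t \<in> {0..pi}" and k: "k \<ge> 1"
  have "\<bar>Im (rho lam k * of_real t)\<bar> = \<bar>Im (rho_hat p lam k * of_real t)\<bar>"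
    by (simp add: rho_hat_def)
  also have "\<dots> \<le> \<Omega> * pi" by (rule tb2[OF t k])
  finally have "exp \<bar>Im (rho lam k * of_real t)\<bar> \<le> EE" unfolding EE_def by simp
  then show ?thesis using cos_le[of "rho lam k * of_real t"] by linarith
qed

lemma cosdiff: "t \<in> {0..pi} \<Longrightarrow> k \<ge> 1 \<Longrightarrow>
   cmod (cos (rho lam k * of_real t) - cos (of_real (rho_t p k * t))) \<le> 2 * EE * pi * xi p lam al k"
proof -
  assume t: "t \<in> {0..pi}" and k: "k \<ge> 1"
  have "cmod (cos (rho lam k * of_real t) - cos (of_real (rho_t p k * t)))
     \<le> 2 * exp (\<Omega> * pi) * cmod (rho_hat p lam k * of_real t)"
    unfolding rsplit by (rule cos_shift1[OF tb2[OF t k]])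
  also have "\<dots> \<le> 2 * EE * (xi p lam al k * pi)"
    unfolding EE_def using tb[OF t k] by simp
  finally show ?thesis by (simp add: mult_ac)
qed

lemma cosdiff2: "t \<in> {0..pi} \<Longrightarrow> k \<ge> 1 \<Longrightarrow>
   cmod (cos (rho lam k * of_real t) - cos (of_real (rho_t p k * t)) + rho_hat p lam k * of_real t * sin (of_real (rho_t p k * t)))
     \<le> 2 * EE * pi^2 * (xi p lam al k)^2"
proof -
  assume t: "t \<in> {0..pi}" and k: "k \<ge> 1"
  have "cmod (cos (rho lam k * of_real t) - cos (of_real (rho_t p k * t)) + rho_hat p lam k * of_real t * sin (of_real (rho_t p k * t)))
     \<le> 2 * exp (\<Omega> * pi) * cmod (rho_hat p lam k * of_real t) ^ 2"
    unfolding rsplit by (rule cos_shift2[OF tb2[OF t k]])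
  also have "\<dots> \<le> 2 * EE * (xi p lam al k * pi) ^ 2"
    unfolding EE_def using tb[OF t k] by (intro mult_left_mono power_mono) auto
  finally show ?thesis by (simp add: mult_ac power_mult_distrib)
qed

lemma f0: "k \<ge> 1 \<Longrightarrow> cmod (f k 0) \<le> norm_m f" by (rule f_le) auto
lemma f1: "k \<ge> 1 \<Longrightarrow> cmod (f k 1) \<le> norm_m f" by (rule f_le) auto

end


context stg begin

lemma AA_nn[simp]: "0 \<le> AA" using AA_pos by simp
lemma EE_nn[simp]: "0 \<le> EE" using EE_pos by simp
declare xi_nn[simp] F_nn[simp]

definition "K2c = EE * (AA + 5)"
definition "K1c = 2 * EE * pi * (AA + 3)"

lemma cf_small: "t \<in> {0..pi} \<Longrightarrow> k \<ge> 1 \<Longrightarrow> cmod (cf p lam al f k t) \<le> K2c * norm_m f * xi p lam al k"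
proof -
  assume t: "t \<in> {0..pi}" and k: "k \<ge> 1"
  let ?c = "cos (rho lam k * of_real t)" and ?d = "cos (of_real (rho_t p k * t)) :: complex"
  let ?F = "norm_m f" and ?x = "xi p lam al k"
  have eq: "cf p lam al f k t = al k * ?c * rho_hat p lam k * f k 0 + (al k - of_real (alpha_t p k)) * ?c * f k 1
      + of_real (alpha_t p k) * (?c - ?d) * f k 1"
    unfolding cf_def by (simp add: algebra_simps)
  have b1: "cmod (al k * ?c * rho_hat p lam k * f k 0) \<le> AA * EE * ?x * ?F"
    unfolding norm_mult using al_AA[OF k] cos_r_le[OF t k] rhat_le'[of k] f0[OF k]
    by (intro mult_mono) (auto simp: xi_nn)
  have b2: "cmod ((al k - of_real (alpha_t p k)) * ?c * f k 1) \<le> ?x * EE * ?F"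
    unfolding norm_mult using al_le[of k] cos_r_le[OF t k] f1[OF k]
    by (intro mult_mono) (auto simp: xi_nn)
  have b3: "cmod (of_real (alpha_t p k) * (?c - ?d) * f k 1) \<le> (2/pi) * (2 * EE * pi * ?x) * ?F"
    unfolding norm_mult norm_of_real using at_le[of p k] cosdiff[OF t k] f1[OF k]
    by (intro mult_mono) (auto simp: xi_nn EE_pos less_imp_le)
  have "cmod (cf p lam al f k t) \<le> AA * EE * ?x * ?F + ?x * EE * ?F + (2/pi) * (2 * EE * pi * ?x) * ?F"
    unfolding eq by (rule order_trans[OF norm_triangle_ineq add_mono[OF order_trans[OF norm_triangle_ineq add_mono[OF b1 b2]] b3]])
  also have "\<dots> = K2c * ?F * ?x"
    unfolding K2c_def by (simp add: field_simps)
  finally show ?thesis .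
qed

definition "beta k = al k * rho_hat p lam k * f k 0 + (al k - of_real (alpha_t p k)) * f k 1"
definition "gamma k = - of_real (alpha_t p k) * rho_hat p lam k * f k 1"

lemma beta_le: "k \<ge> 1 \<Longrightarrow> cmod (beta k) \<le> (AA + 1) * norm_m f * xi p lam al k"
proof -
  assume k: "k \<ge> 1"
  have "cmod (beta k) \<le> cmod (al k * rho_hat p lam k * f k 0) + cmod ((al k - of_real (alpha_t p k)) * f k 1)"
    unfolding beta_def by (rule norm_triangle_ineq)
  also have "\<dots> \<le> AA * xi p lam al k * norm_m f + xi p lam al k * norm_m f"
    unfolding norm_mult using al_AA[OF k] rhat_le'[of k] f0[OF k] f1[OF k] al_le[of k]
    by (intro add_mono mult_mono) auto
  finally show ?thesis by (simp add: algebra_simps)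
qed

lemma gamma_le: "k \<ge> 1 \<Longrightarrow> cmod (gamma k) \<le> norm_m f * xi p lam al k"
proof -
  assume k: "k \<ge> 1"
  have "cmod (gamma k) \<le> (2/pi) * xi p lam al k * norm_m f"
    unfolding gamma_def norm_mult norm_minus_cancel norm_of_real using at_le[of p k] rhat_le'[of k] f1[OF k]
    by (intro mult_mono) auto
  also have "\<dots> \<le> 1 * (xi p lam al k * norm_m f)"
    unfolding mult.assoc using pi_gt3 by (intro mult_right_mono) (auto simp: field_simps)
  finally show ?thesis by (simp add: mult_ac)
qed

lemma cf_large: "t \<in> {0..pi} \<Longrightarrow> k \<ge> 1 \<Longrightarrow>
  cmod (cf p lam al f k t - beta k * cos (of_real (rho_t p k * t)) - gamma k * of_real t * sin (of_real (rho_t p k * t)))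
    \<le> K1c * norm_m f * (xi p lam al k)^2"
proof -
  assume t: "t \<in> {0..pi}" and k: "k \<ge> 1"
  let ?c = "cos (rho lam k * of_real t)" and ?d = "cos (of_real (rho_t p k * t)) :: complex"
  let ?s = "sin (of_real (rho_t p k * t)) :: complex"
  let ?F = "norm_m f" and ?x = "xi p lam al k"
  have eq: "cf p lam al f k t - beta k * ?d - gamma k * of_real t * ?s
     = al k * rho_hat p lam k * f k 0 * (?c - ?d) + (al k - of_real (alpha_t p k)) * f k 1 * (?c - ?d)
      + of_real (alpha_t p k) * f k 1 * (?c - ?d + rho_hat p lam k * of_real t * ?s)"
    unfolding cf_def beta_def gamma_def by (simp add: algebra_simps)
  have b1: "cmod (al k * rho_hat p lam k * f k 0 * (?c - ?d)) \<le> AA * ?x * ?F * (2 * EE * pi * ?x)"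
    unfolding norm_mult using al_AA[OF k] cosdiff[OF t k] rhat_le'[of k] f0[OF k]
    by (intro mult_mono) auto
  have b2: "cmod ((al k - of_real (alpha_t p k)) * f k 1 * (?c - ?d)) \<le> ?x * ?F * (2 * EE * pi * ?x)"
    unfolding norm_mult using al_le[of k] cosdiff[OF t k] f1[OF k]
    by (intro mult_mono) auto
  have b3: "cmod (of_real (alpha_t p k) * f k 1 * (?c - ?d + rho_hat p lam k * of_real t * ?s)) \<le> (2/pi) * ?F * (2 * EE * pi^2 * ?x^2)"
    unfolding norm_mult norm_of_real using at_le[of p k] cosdiff2[OF t k] f1[OF k]
    by (intro mult_mono) auto
  have "cmod (cf p lam al f k t - beta k * ?d - gamma k * of_real t * ?s)
     \<le> AA * ?x * ?F * (2 * EE * pi * ?x) + ?x * ?F * (2 * EE * pi * ?x) + (2/pi) * ?F * (2 * EE * pi^2 * ?x^2)"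
    unfolding eq by (rule order_trans[OF norm_triangle_ineq add_mono[OF order_trans[OF norm_triangle_ineq add_mono[OF b1 b2]] b3]])
  also have "\<dots> = K1c * ?F * ?x^2"
    unfolding K1c_def by (simp add: field_simps power2_eq_square)
  finally show ?thesis .
qed

end


lemma sq4: "(a + b + c + d)^2 \<le> 4 * (a^2 + b^2 + c^2 + (d::real)^2)"
proof -
  have "0 \<le> (a-b)^2 + (a-c)^2 + (a-d)^2 + (b-c)^2 + (b-d)^2 + (c-d)^2" by simp
  then show ?thesis by (simp add: power2_eq_square algebra_simps)
qed

context stg begin

definition "Ca = 4 * (pi * (real p + 1) * K2c^2 + pi * (AA + 1)^2 + pi^3)"
definition "Cb = 4 * pi * K1c^2"

lemma G_L2:
  assumes K: "finite K" "K \<subseteq> {1..}"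
  shows "integral {0..pi} (\<lambda>t. (cmod (Gf p lam al f K t))^2)
     \<le> (norm_m f)^2 * (Ca * (\<Sum>k\<in>K. (xi p lam al k)^2) + Cb * (\<Sum>k\<in>K. (xi p lam al k)^2)^2)"
proof -
  define F where "F = norm_m f"
  define \<Psi> where "\<Psi> = (\<Sum>k\<in>K. (xi p lam al k)^2)"
  define Ks where "Ks = {k\<in>K. k \<le> p + 1}"
  define Kl where "Kl = {k\<in>K. p + 1 < k}"
  define \<phi> where "\<phi> k = k - (p + 1)" for k
  define Gs where "Gs t = (\<Sum>k\<in>Ks. cf p lam al f k t)" for t
  define Bf where "Bf t = (\<Sum>k\<in>Kl. beta k * of_real (cos (real (\<phi> k) * t)))" for t
  define Gm where "Gm t = (\<Sum>k\<in>Kl. gamma k * of_real (sin (real (\<phi> k) * t)))" for t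
  define R where "R t = (\<Sum>k\<in>Kl. cf p lam al f k t - beta k * cos (of_real (rho_t p k * t))
        - gamma k * of_real t * sin (of_real (rho_t p k * t)))" for t
  have fin: "finite Ks" "finite Kl" using K by (auto simp: Ks_def Kl_def)
  have Kun: "K = Ks \<union> Kl" and Kdis: "Ks \<inter> Kl = {}" by (auto simp: Ks_def Kl_def)
  have K1: "k \<in> K \<Longrightarrow> k \<ge> 1" for k using K by auto
  have rtl: "k \<in> Kl \<Longrightarrow> rho_t p k = real (\<phi> k)" for k
    by (auto simp: rho_t_def \<phi>_def Kl_def)
  have Psi_nn: "0 \<le> \<Psi>" unfolding \<Psi>_def by (intro sum_nonneg) auto
  have Psi_s: "(\<Sum>k\<in>Ks. (xi p lam al k)^2) \<le> \<Psi>" "(\<Sum>k\<in>Kl. (xi p lam al k)^2) \<le> \<Psi>"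
    unfolding \<Psi>_def using K(1) by (auto intro!: sum_mono2 simp: Ks_def Kl_def)
  have decomp: "Gf p lam al f K t = Gs t + Bf t + of_real t * Gm t + R t" for t
  proof -
    have "Gf p lam al f K t = Gs t + (\<Sum>k\<in>Kl. cf p lam al f k t)"
      unfolding Gf_def Gs_def Kun using fin Kdis by (rule sum.union_disjoint)
    moreover have "(\<Sum>k\<in>Kl. beta k * cos (of_real (rho_t p k * t))) = Bf t"
      unfolding Bf_def
    proof (intro sum.cong refl)
      fix k assume "k \<in> Kl"
      then show "beta k * cos (of_real (rho_t p k * t)) = beta k * of_real (cos (real (\<phi> k) * t))"
        using rtl[of k] by (simp only: cos_of_real)
    qed
    moreover have "(\<Sum>k\<in>Kl. gamma k * of_real t * sin (of_real (rho_t p k * t))) = of_real t * Gm t"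
      unfolding Gm_def sum_distrib_left
    proof (intro sum.cong refl)
      fix k assume "k \<in> Kl"
      then show "gamma k * of_real t * sin (of_real (rho_t p k * t)) = of_real t * (gamma k * of_real (sin (real (\<phi> k) * t)))"
        using rtl[of k] by (simp only: sin_of_real mult_ac)
    qed
    moreover have "R t = (\<Sum>k\<in>Kl. cf p lam al f k t) - (\<Sum>k\<in>Kl. beta k * cos (of_real (rho_t p k * t)))
        - (\<Sum>k\<in>Kl. gamma k * of_real t * sin (of_real (rho_t p k * t)))"
      unfolding R_def by (simp add: sum_subtractf)
    ultimately show ?thesis by simp
  qed
  have Gs_le: "(cmod (Gs t))^2 \<le> K2c^2 * F^2 * (real p + 1) * \<Psi>" if t: "t \<in> {0..pi}" for t
  proof -
    have "cmod (Gs t) \<le> (\<Sum>k\<in>Ks. K2c * F * xi p lam al k)"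
      unfolding Gs_def F_def by (rule order_trans[OF norm_sum sum_mono]) (auto intro!: cf_small t K1 simp: Ks_def)
    also have "\<dots> = K2c * F * (\<Sum>k\<in>Ks. xi p lam al k)" by (simp add: sum_distrib_left)
    finally have a: "cmod (Gs t) \<le> K2c * F * (\<Sum>k\<in>Ks. xi p lam al k)" .
    have cs: "(\<Sum>k\<in>Ks. xi p lam al k)^2 \<le> (\<Sum>k\<in>Ks. (xi p lam al k)^2) * real (card Ks)"
      using Cauchy_Schwarz_ineq_sum[of "\<lambda>k. xi p lam al k" "\<lambda>_. 1" Ks] by simp
    have "card Ks \<le> card {1..p+1}" using K by (intro card_mono) (auto simp: Ks_def)
    then have cK: "real (card Ks) \<le> real p + 1" by simp
    have "(\<Sum>k\<in>Ks. (xi p lam al k)^2) * real (card Ks) \<le> \<Psi> * (real p + 1)"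
      using Psi_s(1) cK Psi_nn by (intro mult_mono) (auto intro!: sum_nonneg)
    with cs have b: "(\<Sum>k\<in>Ks. xi p lam al k)^2 \<le> \<Psi> * (real p + 1)" by linarith
    have "(cmod (Gs t))^2 \<le> (K2c * F * (\<Sum>k\<in>Ks. xi p lam al k))^2"
      using a by (intro power_mono) auto
    also have "\<dots> = (K2c * F)^2 * (\<Sum>k\<in>Ks. xi p lam al k)^2" by (simp add: power_mult_distrib)
    also have "\<dots> \<le> (K2c * F)^2 * (\<Psi> * (real p + 1))" using b by (intro mult_left_mono) auto
    finally show ?thesis by (simp add: power_mult_distrib mult_ac)
  qed
  have R_le: "cmod (R t) \<le> K1c * F * \<Psi>" if t: "t \<in> {0..pi}" for t
  proof -
    have "cmod (R t) \<le> (\<Sum>k\<in>Kl. K1c * F * (xi p lam al k)^2)"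
      unfolding R_def F_def by (rule order_trans[OF norm_sum sum_mono], rule cf_large[OF t], use K in \<open>auto simp: Kl_def\<close>)
    also have "\<dots> = K1c * F * (\<Sum>k\<in>Kl. (xi p lam al k)^2)" by (simp add: sum_distrib_left)
    also have "\<dots> \<le> K1c * F * \<Psi>" using Psi_s(2) by (intro mult_left_mono) (auto simp: K1c_def F_def)
    finally show ?thesis .
  qed
  define c1 where "c1 = K2c^2 * F^2 * (real p + 1) * \<Psi>"
  define c2 where "c2 = (K1c * F * \<Psi>)^2"
  have pw: "(cmod (Gf p lam al f K t))^2 \<le> 4 * (c1 + (cmod (Bf t))^2 + pi^2 * (cmod (Gm t))^2 + c2)"
    if t: "t \<in> {0..pi}" for t
  proof -
    have "cmod (Gf p lam al f K t) \<le> cmod (Gs t) + cmod (Bf t) + cmod (of_real t * Gm t) + cmod (R t)"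
      unfolding decomp by (meson add_mono norm_triangle_ineq order_trans order_refl)
    then have "(cmod (Gf p lam al f K t))^2 \<le> (cmod (Gs t) + cmod (Bf t) + cmod (of_real t * Gm t) + cmod (R t))^2"
      by (intro power_mono) auto
    also have "\<dots> \<le> 4 * ((cmod (Gs t))^2 + (cmod (Bf t))^2 + (cmod (of_real t * Gm t))^2 + (cmod (R t))^2)"
      by (rule sq4)
    also have "\<dots> \<le> 4 * (c1 + (cmod (Bf t))^2 + pi^2 * (cmod (Gm t))^2 + c2)"
    proof -
      have "(cmod (of_real t * Gm t))^2 = t^2 * (cmod (Gm t))^2" using t by (simp add: norm_mult power_mult_distrib)
      also have "\<dots> \<le> pi^2 * (cmod (Gm t))^2" using t by (intro mult_right_mono power_mono) auto
      finally have a: "(cmod (of_real t * Gm t))^2 \<le> pi^2 * (cmod (Gm t))^2" .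
      have b: "(cmod (R t))^2 \<le> c2" unfolding c2_def using R_le[OF t] by (intro power_mono) auto
      have c: "(cmod (Gs t))^2 \<le> c1" unfolding c1_def using Gs_le[OF t] .
      show ?thesis by (intro mult_left_mono add_mono a b c order_refl) auto
    qed
    finally show ?thesis .
  qed
  have cB: "continuous_on {0..pi} Bf" unfolding Bf_def by (intro continuous_intros)
  have cM: "continuous_on {0..pi} Gm" unfolding Gm_def by (intro continuous_intros)
  have cG: "continuous_on {0..pi} (Gf p lam al f K)" by (rule cont_Gf)
  have iB: "(\<lambda>t. (cmod (Bf t))^2) integrable_on {0..pi}"
    by (intro integrable_continuous_interval continuous_intros cB)
  have iM: "(\<lambda>t. (cmod (Gm t))^2) integrable_on {0..pi}"
    by (intro integrable_continuous_interval continuous_intros cM)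
  have injl: "inj_on \<phi> Kl" unfolding \<phi>_def Kl_def by (auto simp: inj_on_def)
  have IB: "integral {0..pi} (\<lambda>t. (cmod (Bf t))^2) \<le> pi * ((AA + 1)^2 * F^2 * \<Psi>)"
  proof -
    have "integral {0..pi} (\<lambda>t. (cmod (Bf t))^2) \<le> pi * (\<Sum>k\<in>Kl. (cmod (beta k))^2)"
      unfolding Bf_def using cosys.parseval_c[OF fin(2) injl, of beta] by simp
    also have "\<dots> \<le> pi * (\<Sum>k\<in>Kl. ((AA + 1) * F * xi p lam al k)^2)"
      using K by (intro mult_left_mono sum_mono power_mono) (auto simp: F_def Kl_def intro!: beta_le)
    also have "\<dots> = pi * ((AA + 1)^2 * F^2 * (\<Sum>k\<in>Kl. (xi p lam al k)^2))"
      by (simp add: power_mult_distrib sum_distrib_left)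
    also have "\<dots> \<le> pi * ((AA + 1)^2 * F^2 * \<Psi>)"
      using Psi_s(2) by (intro mult_left_mono) auto
    finally show ?thesis .
  qed
  have IM: "integral {0..pi} (\<lambda>t. (cmod (Gm t))^2) \<le> pi * (F^2 * \<Psi>)"
  proof -
    have "integral {0..pi} (\<lambda>t. (cmod (Gm t))^2) \<le> pi * (\<Sum>k\<in>Kl. (cmod (gamma k))^2)"
      unfolding Gm_def using sinsys.parseval_c[OF fin(2) injl, of gamma] by simp
    also have "\<dots> \<le> pi * (\<Sum>k\<in>Kl. (F * xi p lam al k)^2)"
      using K by (intro mult_left_mono sum_mono power_mono) (auto simp: F_def Kl_def intro!: gamma_le)
    also have "\<dots> = pi * (F^2 * (\<Sum>k\<in>Kl. (xi p lam al k)^2))"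
      by (simp add: power_mult_distrib sum_distrib_left)
    also have "\<dots> \<le> pi * (F^2 * \<Psi>)"
      using Psi_s(2) by (intro mult_left_mono) auto
    finally show ?thesis .
  qed
  have "integral {0..pi} (\<lambda>t. (cmod (Gf p lam al f K t))^2)
      \<le> integral {0..pi} (\<lambda>t. 4 * (c1 + (cmod (Bf t))^2 + pi^2 * (cmod (Gm t))^2 + c2))"
  proof (rule integral_le)
    show "(\<lambda>t. (cmod (Gf p lam al f K t))^2) integrable_on {0..pi}"
      by (intro integrable_continuous_interval continuous_intros cG)
    show "(\<lambda>t. 4 * (c1 + (cmod (Bf t))^2 + pi^2 * (cmod (Gm t))^2 + c2)) integrable_on {0..pi}"
      by (intro integrable_continuous_interval continuous_intros cB cM)
  qed (rule pw)
  also have "\<dots> = 4 * (pi * c1 + integral {0..pi} (\<lambda>t. (cmod (Bf t))^2) + pi^2 * integral {0..pi} (\<lambda>t. (cmod (Gm t))^2) + pi * c2)"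
  proof -
    have "integral {0..pi} (\<lambda>t. c1 + (cmod (Bf t))^2 + pi^2 * (cmod (Gm t))^2 + c2)
        = integral {0..pi} (\<lambda>t. c1 + (cmod (Bf t))^2 + pi^2 * (cmod (Gm t))^2) + integral {0..pi} (\<lambda>t. c2)"
      by (intro integral_add integrable_add iB iM integrable_on_cmult_left integrable_continuous_interval continuous_intros cB cM)
    also have "integral {0..pi} (\<lambda>t. c1 + (cmod (Bf t))^2 + pi^2 * (cmod (Gm t))^2)
        = integral {0..pi} (\<lambda>t. c1 + (cmod (Bf t))^2) + integral {0..pi} (\<lambda>t. pi^2 * (cmod (Gm t))^2)"
      by (intro integral_add integrable_add iB iM integrable_on_cmult_left integrable_continuous_interval continuous_intros cB cM)
    also have "integral {0..pi} (\<lambda>t. c1 + (cmod (Bf t))^2) = integral {0..pi} (\<lambda>t. c1) + integral {0..pi} (\<lambda>t. (cmod (Bf t))^2)"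
      by (intro integral_add iB integrable_continuous_interval continuous_intros)
    finally have h: "integral {0..pi} (\<lambda>t. c1 + (cmod (Bf t))^2 + pi^2 * (cmod (Gm t))^2 + c2)
       = pi * c1 + integral {0..pi} (\<lambda>t. (cmod (Bf t))^2) + pi^2 * integral {0..pi} (\<lambda>t. (cmod (Gm t))^2) + pi * c2"
      by simp
    show ?thesis using h by (simp only: integral_mult_right)
  qed
  also have "\<dots> \<le> 4 * (pi * c1 + pi * ((AA + 1)^2 * F^2 * \<Psi>) + pi^2 * (pi * (F^2 * \<Psi>)) + pi * c2)"
    using IB IM by (intro mult_left_mono add_mono order_refl) auto
  also have "\<dots> = F^2 * (Ca * \<Psi> + Cb * \<Psi>^2)"
    unfolding c1_def c2_def Ca_def Cb_def by (simp add: algebra_simps power2_eq_square power3_eq_cube)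
  finally show ?thesis unfolding F_def \<Psi>_def .
qed

end


lemma reindex_le:
  fixes g :: "nat \<Rightarrow> real"
  assumes g: "\<And>m. 0 \<le> g m"
  shows "(\<Sum>n\<in>{1..M}. g (n - (p + 1))) \<le> (real p + 2) * (\<Sum>m\<in>{0..M}. g m)"
proof -
  define A where "A = {n\<in>{1..M}. n \<le> p + 1}"
  define B where "B = {n\<in>{1..M}. p + 1 < n}"
  have un: "{1..M} = A \<union> B" and dis: "A \<inter> B = {}" by (auto simp: A_def B_def)
  have fin: "finite A" "finite B" by (auto simp: A_def B_def)
  have S0: "0 \<le> (\<Sum>m\<in>{0..M}. g m)" by (intro sum_nonneg g)
  have "(\<Sum>n\<in>A. g (n - (p + 1))) = (\<Sum>n\<in>A. g 0)"
    by (intro sum.cong refl) (auto simp: A_def)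
  also have "\<dots> = real (card A) * g 0" by simp
  also have "\<dots> \<le> (real p + 1) * g 0"
  proof -
    have "card A \<le> card {1..p+1}" by (intro card_mono) (auto simp: A_def)
    then show ?thesis using g[of 0] by (intro mult_right_mono) auto
  qed
  also have "\<dots> \<le> (real p + 1) * (\<Sum>m\<in>{0..M}. g m)"
  proof -
    have "g 0 \<le> (\<Sum>m\<in>{0..M}. g m)" using g by (intro member_le_sum) auto
    then show ?thesis by (intro mult_left_mono) auto
  qed
  finally have a: "(\<Sum>n\<in>A. g (n - (p + 1))) \<le> (real p + 1) * (\<Sum>m\<in>{0..M}. g m)" .
  have inj: "inj_on (\<lambda>n. n - (p + 1)) B" by (auto simp: B_def inj_on_def)
  have "(\<Sum>n\<in>B. g (n - (p + 1))) = (\<Sum>m\<in>(\<lambda>n. n - (p + 1)) ` B. g m)"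
    using inj by (simp add: sum.reindex)
  also have "\<dots> \<le> (\<Sum>m\<in>{0..M}. g m)"
    by (intro sum_mono2 g) (auto simp: B_def)
  finally have b: "(\<Sum>n\<in>B. g (n - (p + 1))) \<le> (\<Sum>m\<in>{0..M}. g m)" .
  have "(\<Sum>n\<in>{1..M}. g (n - (p + 1))) = (\<Sum>n\<in>A. g (n - (p + 1))) + (\<Sum>n\<in>B. g (n - (p + 1)))"
    unfolding un by (rule sum.union_disjoint[OF fin dis])
  also have "\<dots> \<le> (real p + 1) * (\<Sum>m\<in>{0..M}. g m) + (\<Sum>m\<in>{0..M}. g m)" using a b by linarith
  finally show ?thesis by (simp add: algebra_simps)
qed

lemma sq2: "(a + b)^2 \<le> 2 * a^2 + 2 * (b::real)^2"
proof -
  have "0 \<le> (a - b)^2" by simp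
  then show ?thesis by (simp add: power2_eq_square algebra_simps)
qed

context stg begin

definition "Cout = 2 * (real p + 2) * pi + 8 * EE^2 * pi^3 * \<Omega>^2"

lemma out_bound:
  assumes K: "finite K" "K \<subseteq> {1..}" and i: "i \<in> {0,1}"
  shows "(\<Sum>n\<in>{1..M}. (cmod (\<Sum>k\<in>K. QT_term p lam al x f n i k))^2)
     \<le> Cout * integral {0..pi} (\<lambda>t. (cmod (Gf p lam al f K t))^2)"
proof -
  define G where "G = Gf p lam al f K"
  have x0: "0 \<le> x" and xp: "x \<le> pi" using xr by auto
  have cG: "continuous_on A G" for A unfolding G_def by (rule cont_Gf)
  define L where "L = integral {0..x} (\<lambda>t. (cmod (G t))^2)"
  have LL: "L \<le> integral {0..pi} (\<lambda>t. (cmod (G t))^2)"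
    unfolding L_def using xp
    by (intro integral_subset_le) (auto intro!: integrable_continuous_interval continuous_intros cG)
  have L0: "0 \<le> L" unfolding L_def by (intro integral_nonneg integrable_continuous_interval continuous_intros cG) auto
  define g where "g m = (cmod (integral {0..x} (\<lambda>t. of_real (cos (real m * t)) * G t)))^2" for m
  have g0: "0 \<le> g m" for m unfolding g_def by simp
  have bes: "(\<Sum>m\<in>{0..M}. g m) \<le> pi * L"
    unfolding g_def L_def using cosys.bessel_c[OF x0 xp cG, of "{0..M}"] by simp
  have S: "(\<Sum>k\<in>K. QT_term p lam al x f n j k) = integral {0..x} (\<lambda>t. cos (sig p lam n j * of_real t) * G t)"
    if "j \<in> {0,1}" for n j unfolding G_def by (rule sum_repr[OF that K(1)])
  have S1: "(cmod (\<Sum>k\<in>K. QT_term p lam al x f n 1 k))^2 = g (n - (p + 1))" for n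
  proof -
    have cs: "cos (sig p lam n 1 * of_real t) = of_real (cos (real (n - (p + 1)) * t))" for t
      by (simp only: sig_def rho_t_def cos_of_real[symmetric] of_real_mult if_False one_neq_zero) simp
    have "(\<Sum>k\<in>K. QT_term p lam al x f n 1 k) = integral {0..x} (\<lambda>t. cos (sig p lam n 1 * of_real t) * G t)"
      by (rule S) simp
    also have "\<dots> = integral {0..x} (\<lambda>t. of_real (cos (real (n - (p + 1)) * t)) * G t)"
      unfolding cs ..
    finally show ?thesis unfolding g_def by simp
  qed
  have sum1: "(\<Sum>n\<in>{1..M}. (cmod (\<Sum>k\<in>K. QT_term p lam al x f n 1 k))^2) \<le> (real p + 2) * (pi * L)"
  proof -
    have "(\<Sum>n\<in>{1..M}. (cmod (\<Sum>k\<in>K. QT_term p lam al x f n 1 k))^2) = (\<Sum>n\<in>{1..M}. g (n - (p + 1)))"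
      using S1 by simp
    also have "\<dots> \<le> (real p + 2) * (\<Sum>m\<in>{0..M}. g m)" by (rule reindex_le[OF g0])
    also have "\<dots> \<le> (real p + 2) * (pi * L)" using bes by (intro mult_left_mono) auto
    finally show ?thesis .
  qed
  have Cout0: "0 \<le> Cout" unfolding Cout_def by simp
  have iG: "(\<lambda>t. cmod (G t)) integrable_on {0..x}"
    by (intro integrable_continuous_interval continuous_intros cG)
  have l1: "(integral {0..x} (\<lambda>t. cmod (G t)))^2 \<le> pi * L"
    unfolding L_def using l1_l2[OF x0 xp, of "\<lambda>t. cmod (G t)"] by (simp add: continuous_intros cG)
  have I1: "integral {0..x} (\<lambda>t. cmod (G t)) \<ge> 0" by (intro integral_nonneg iG) auto
  have Dn: "(cmod (\<Sum>k\<in>K. QT_term p lam al x f n 0 k))^2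
       \<le> 2 * (cmod (\<Sum>k\<in>K. QT_term p lam al x f n 1 k))^2 + 2 * (4 * EE^2 * pi^3 * L * (xi p lam al n)^2)"
    if n: "n \<ge> 1" for n
  proof -
    define D where "D = integral {0..x} (\<lambda>t. (cos (sig p lam n 0 * of_real t) - cos (sig p lam n 1 * of_real t)) * G t)"
    have "(\<Sum>k\<in>K. QT_term p lam al x f n 0 k) = integral {0..x} (\<lambda>t. cos (sig p lam n 0 * of_real t) * G t)"
      by (rule S) simp
    also have "\<dots> = integral {0..x} (\<lambda>t. cos (sig p lam n 1 * of_real t) * G t) + D"
      unfolding D_def
      by (subst integral_add[symmetric]) (auto intro!: integrable_continuous_interval continuous_intros cG simp: algebra_simps)
    also have "integral {0..x} (\<lambda>t. cos (sig p lam n 1 * of_real t) * G t) = (\<Sum>k\<in>K. QT_term p lam al x f n 1 k)"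
      by (rule S[symmetric]) simp
    finally have eq: "(\<Sum>k\<in>K. QT_term p lam al x f n 0 k) = (\<Sum>k\<in>K. QT_term p lam al x f n 1 k) + D" .
    have "cmod D \<le> integral {0..x} (\<lambda>t. (2 * EE * pi * xi p lam al n) * cmod (G t))"
      unfolding D_def
    proof (rule integral_norm_bound_integral)
      show "(\<lambda>t. (cos (sig p lam n 0 * of_real t) - cos (sig p lam n 1 * of_real t)) * G t) integrable_on {0..x}"
        by (intro integrable_continuous_interval continuous_intros cG)
      show "(\<lambda>t. (2 * EE * pi * xi p lam al n) * cmod (G t)) integrable_on {0..x}"
        by (intro integrable_continuous_interval continuous_intros cG)
      fix t assume t: "t \<in> {0..x}"
      then have t': "t \<in> {0..pi}" using xp by auto
      have "cmod (cos (sig p lam n 0 * of_real t) - cos (sig p lam n 1 * of_real t)) \<le> 2 * EE * pi * xi p lam al n"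
        using cosdiff[OF t' n] by (simp add: sig_def)
      then show "cmod ((cos (sig p lam n 0 * of_real t) - cos (sig p lam n 1 * of_real t)) * G t) \<le> (2 * EE * pi * xi p lam al n) * cmod (G t)"
        unfolding norm_mult by (intro mult_right_mono) auto
    qed
    also have "\<dots> = (2 * EE * pi * xi p lam al n) * integral {0..x} (\<lambda>t. cmod (G t))" by simp
    finally have cD: "cmod D \<le> (2 * EE * pi * xi p lam al n) * integral {0..x} (\<lambda>t. cmod (G t))" .
    have "(cmod D)^2 \<le> ((2 * EE * pi * xi p lam al n) * integral {0..x} (\<lambda>t. cmod (G t)))^2"
      using cD by (intro power_mono) auto
    also have "\<dots> = (2 * EE * pi * xi p lam al n)^2 * (integral {0..x} (\<lambda>t. cmod (G t)))^2"
      by (simp add: power_mult_distrib)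
    also have "\<dots> \<le> (2 * EE * pi * xi p lam al n)^2 * (pi * L)"
      using l1 by (intro mult_left_mono) auto
    also have "\<dots> = 4 * EE^2 * pi^3 * L * (xi p lam al n)^2"
      by (simp add: power_mult_distrib power2_eq_square power3_eq_cube)
    finally have D2: "(cmod D)^2 \<le> 4 * EE^2 * pi^3 * L * (xi p lam al n)^2" .
    have "(cmod (\<Sum>k\<in>K. QT_term p lam al x f n 0 k))^2 \<le> (cmod (\<Sum>k\<in>K. QT_term p lam al x f n 1 k) + cmod D)^2"
      unfolding eq by (intro power_mono norm_triangle_ineq) auto
    also have "\<dots> \<le> 2 * (cmod (\<Sum>k\<in>K. QT_term p lam al x f n 1 k))^2 + 2 * (cmod D)^2"
      by (rule sq2)
    finally show ?thesis using D2 by linarith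
  qed
  have "(\<Sum>n\<in>{1..M}. (cmod (\<Sum>k\<in>K. QT_term p lam al x f n i k))^2) \<le> Cout * L"
  proof (cases "i = 0")
    case True
    have "(\<Sum>n\<in>{1..M}. (cmod (\<Sum>k\<in>K. QT_term p lam al x f n 0 k))^2)
       \<le> (\<Sum>n\<in>{1..M}. 2 * (cmod (\<Sum>k\<in>K. QT_term p lam al x f n 1 k))^2 + 2 * (4 * EE^2 * pi^3 * L * (xi p lam al n)^2))"
      by (intro sum_mono Dn) auto
    also have "\<dots> = 2 * (\<Sum>n\<in>{1..M}. (cmod (\<Sum>k\<in>K. QT_term p lam al x f n 1 k))^2) + 8 * EE^2 * pi^3 * L * (\<Sum>n\<in>{1..M}. (xi p lam al n)^2)"
      by (simp add: sum.distrib sum_distrib_left mult_ac)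
    also have "\<dots> \<le> 2 * ((real p + 2) * (pi * L)) + 8 * EE^2 * pi^3 * L * \<Omega>^2"
      using sum1 Psi_le[of "{1..M}"] L0 by (intro add_mono mult_left_mono) auto
    also have "\<dots> = Cout * L" unfolding Cout_def by (simp add: algebra_simps)
    finally show ?thesis using True by simp
  next
    case False
    then have i1: "i = 1" using i by auto
    have "(real p + 2) * (pi * L) \<le> Cout * L"
      unfolding Cout_def using L0 by (simp add: algebra_simps)
    then show ?thesis using sum1 i1 by simp
  qed
  also have "\<dots> \<le> Cout * integral {0..pi} (\<lambda>t. (cmod (G t))^2)"
    using LL Cout0 by (intro mult_left_mono) auto
  finally show ?thesis unfolding G_def .
qed

end



definition "EEx (\<Omega>::real) = exp (\<Omega> * pi)"
definition "AAx (\<Omega>::real) = 2 / pi + \<Omega>"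
definition "K2x \<Omega> = EEx \<Omega> * (AAx \<Omega> + 5)"
definition "K1x \<Omega> = 2 * EEx \<Omega> * pi * (AAx \<Omega> + 3)"
definition "Cax (p::nat) \<Omega> = 4 * (pi * (real p + 1) * (K2x \<Omega>)^2 + pi * (AAx \<Omega> + 1)^2 + pi^3)"
definition "Cbx \<Omega> = 4 * pi * (K1x \<Omega>)^2"
definition "Coutx (p::nat) \<Omega> = 2 * (real p + 2) * pi + 8 * (EEx \<Omega>)^2 * pi^3 * \<Omega>^2"

context stg begin

lemma cst: "Cout = Coutx p \<Omega>" "Ca = Cax p \<Omega>" "Cb = Cbx \<Omega>"
  unfolding Cout_def Coutx_def Ca_def Cax_def Cb_def Cbx_def K2c_def K2x_def K1c_def K1x_def EE_def EEx_def AA_def AAx_def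
  by simp_all

lemma Cx_nn: "0 \<le> Coutx p \<Omega>" "0 \<le> Cax p \<Omega>" "0 \<le> Cbx \<Omega>"
  unfolding Coutx_def Cax_def Cbx_def by simp_all

lemma mainb:
  assumes K: "finite K" "K \<subseteq> {1..}" and i: "i \<in> {0,1}"
  shows "(\<Sum>n\<in>{1..M}. (cmod (\<Sum>k\<in>K. QT_term p lam al x f n i k))^2)
     \<le> Coutx p \<Omega> * (norm_m f)^2 * (Cax p \<Omega> * (\<Sum>k\<in>K. (xi p lam al k)^2) + Cbx \<Omega> * (\<Sum>k\<in>K. (xi p lam al k)^2)^2)"
proof -
  have "(\<Sum>n\<in>{1..M}. (cmod (\<Sum>k\<in>K. QT_term p lam al x f n i k))^2)
     \<le> Cout * integral {0..pi} (\<lambda>t. (cmod (Gf p lam al f K t))^2)"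
    by (rule out_bound[OF K i])
  also have "\<dots> \<le> Cout * ((norm_m f)^2 * (Ca * (\<Sum>k\<in>K. (xi p lam al k)^2) + Cb * (\<Sum>k\<in>K. (xi p lam al k)^2)^2))"
    by (rule mult_left_mono[OF G_L2[OF K]]) (simp add: cst Cx_nn)
  finally show ?thesis unfolding cst by (simp add: mult_ac)
qed

lemma mainb2:
  assumes K: "finite K" "K \<subseteq> {1..}" and i: "i \<in> {0,1}"
  shows "(\<Sum>n\<in>{1..M}. (cmod (\<Sum>k\<in>K. QT_term p lam al x f n i k))^2)
     \<le> Coutx p \<Omega> * (norm_m f)^2 * (Cax p \<Omega> * \<Omega>^2 + Cbx \<Omega> * \<Omega>^4)"
proof -
  have P: "(\<Sum>k\<in>K. (xi p lam al k)^2) \<le> \<Omega>^2" by (rule Psi_le[OF K])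
  have P0: "0 \<le> (\<Sum>k\<in>K. (xi p lam al k)^2)" by (intro sum_nonneg) auto
  have "(\<Sum>k\<in>K. (xi p lam al k)^2)^2 \<le> (\<Omega>^2)^2" using P P0 by (intro power_mono) auto
  then have P2: "(\<Sum>k\<in>K. (xi p lam al k)^2)^2 \<le> \<Omega>^4" by simp
  have "Cax p \<Omega> * (\<Sum>k\<in>K. (xi p lam al k)^2) + Cbx \<Omega> * (\<Sum>k\<in>K. (xi p lam al k)^2)^2 \<le> Cax p \<Omega> * \<Omega>^2 + Cbx \<Omega> * \<Omega>^4"
    using P P2 Cx_nn by (intro add_mono mult_left_mono) auto
  then have "Coutx p \<Omega> * (norm_m f)^2 * (Cax p \<Omega> * (\<Sum>k\<in>K. (xi p lam al k)^2) + Cbx \<Omega> * (\<Sum>k\<in>K. (xi p lam al k)^2)^2)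
     \<le> Coutx p \<Omega> * (norm_m f)^2 * (Cax p \<Omega> * \<Omega>^2 + Cbx \<Omega> * \<Omega>^4)"
    using Cx_nn by (intro mult_left_mono) auto
  with mainb[OF K i, of M] show ?thesis by linarith
qed

end


lemma Cx_nn': "0 \<le> Coutx p \<Omega>" "0 \<le> Cax p \<Omega>" "0 \<le> Cbx \<Omega>"
  unfolding Coutx_def Cax_def Cbx_def by simp_all

context stg begin

lemma row_summable:
  assumes n: "n \<ge> 1" and i: "i \<in> {0,1}"
  shows "summable (\<lambda>k. QT_term p lam al x f n i (Suc k))"
proof -
  define Qc where "Qc = Coutx p \<Omega> * (norm_m f)^2 * (Cax p \<Omega> + Cbx \<Omega>)"
  have Qc0: "0 \<le> Qc" unfolding Qc_def using Cx_nn' by simp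
  have sm: "summable (\<lambda>k. (xi p lam al (Suc k))\<^sup>2)" using B unfolding in_B_def by auto
  show ?thesis unfolding summable_Cauchy
  proof (intro allI impI)
    fix e :: real assume e: "e > 0"
    define \<delta> where "\<delta> = min 1 (e^2 / (Qc + 1))"
    have d0: "\<delta> > 0" unfolding \<delta>_def using e Qc0 by simp
    obtain N where N: "\<forall>m\<ge>N. \<forall>n'. norm (\<Sum>k\<in>{m..<n'}. (xi p lam al (Suc k))\<^sup>2) < \<delta>"
      using sm[unfolded summable_Cauchy] d0 by blast
    show "\<exists>N. \<forall>m\<ge>N. \<forall>n'. cmod (\<Sum>k\<in>{m..<n'}. QT_term p lam al x f n i (Suc k)) < e"
    proof (intro exI allI impI)
      fix m n' assume m: "m \<ge> N"
      define K where "K = Suc ` {m..<n'}"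
      have K: "finite K" "K \<subseteq> {1..}" unfolding K_def by auto
      have eqS: "(\<Sum>k\<in>{m..<n'}. QT_term p lam al x f n i (Suc k)) = (\<Sum>k\<in>K. QT_term p lam al x f n i k)"
        unfolding K_def by (subst sum.reindex) (auto simp: comp_def)
      define \<Psi> where "\<Psi> = (\<Sum>k\<in>K. (xi p lam al k)^2)"
      have Psi_eq: "\<Psi> = (\<Sum>k\<in>{m..<n'}. (xi p lam al (Suc k))\<^sup>2)"
        unfolding \<Psi>_def K_def by (subst sum.reindex) (auto simp: comp_def)
      have P0: "0 \<le> \<Psi>" unfolding \<Psi>_def by (intro sum_nonneg) auto
      have h: "norm (\<Sum>k\<in>{m..<n'}. (xi p lam al (Suc k))\<^sup>2) < \<delta>" using N m by blast
      have Pd: "\<Psi> < \<delta>" unfolding Psi_eq using h abs_ge_self[of "\<Sum>k\<in>{m..<n'}. (xi p lam al (Suc k))\<^sup>2"] unfolding real_norm_def by linarith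
      have P1: "\<Psi> \<le> 1" using Pd unfolding \<delta>_def by simp
      have "\<Psi>^2 \<le> \<Psi>" using P0 P1 by (simp add: power2_eq_square mult_left_le_one_le)
      then have lin: "Cax p \<Omega> * \<Psi> + Cbx \<Omega> * \<Psi>^2 \<le> (Cax p \<Omega> + Cbx \<Omega>) * \<Psi>"
      proof -
        have "Cbx \<Omega> * \<Psi>^2 \<le> Cbx \<Omega> * \<Psi>" using \<open>\<Psi>^2 \<le> \<Psi>\<close> Cx_nn'(3) by (rule mult_left_mono)
        then show ?thesis by (simp add: algebra_simps)
      qed
      have "(cmod (\<Sum>k\<in>K. QT_term p lam al x f n i k))^2 \<le> (\<Sum>n''\<in>{1..n}. (cmod (\<Sum>k\<in>K. QT_term p lam al x f n'' i k))^2)"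
        using n by (intro member_le_sum) auto
      also have "\<dots> \<le> Coutx p \<Omega> * (norm_m f)^2 * (Cax p \<Omega> * \<Psi> + Cbx \<Omega> * \<Psi>^2)"
        unfolding \<Psi>_def by (rule mainb[OF K i])
      also have "\<dots> \<le> Coutx p \<Omega> * (norm_m f)^2 * ((Cax p \<Omega> + Cbx \<Omega>) * \<Psi>)"
        using lin Cx_nn' by (intro mult_left_mono) auto
      also have "\<dots> = Qc * \<Psi>" unfolding Qc_def by simp
      also have "\<dots> \<le> Qc * \<delta>" using Pd Qc0 by (intro mult_left_mono) auto
      also have "\<dots> \<le> Qc * (e^2 / (Qc + 1))" using Qc0 unfolding \<delta>_def by (intro mult_left_mono) auto
      also have "\<dots> < e^2"
      proof -
        have "Qc * (e^2 / (Qc + 1)) = e^2 * (Qc / (Qc + 1))" by simp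
        also have "\<dots> < e^2 * 1" using e Qc0 by (intro mult_strict_left_mono) auto
        finally show ?thesis by simp
      qed
      finally have sq: "(cmod (\<Sum>k\<in>K. QT_term p lam al x f n i k))^2 < e^2" .
      have "cmod (\<Sum>k\<in>K. QT_term p lam al x f n i k) < e"
        by (rule power_less_imp_less_base[OF sq]) (use e in simp)
      then show "cmod (\<Sum>k\<in>{m..<n'}. QT_term p lam al x f n i (Suc k)) < e" unfolding eqS .
    qed
  qed
qed

end

context stg begin

lemma partial_bound:
  "(\<Sum>n\<in>{1..M}. \<Sum>i\<in>{0::nat,1}. (cmod (\<Sum>k<N. QT_term p lam al x f n i (Suc k)))^2)
     \<le> 2 * (Coutx p \<Omega> * (Cax p \<Omega> * \<Omega>^2 + Cbx \<Omega> * \<Omega>^4)) * (norm_m f)^2"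
proof -
  define Bd where "Bd = Coutx p \<Omega> * (norm_m f)^2 * (Cax p \<Omega> * \<Omega>^2 + Cbx \<Omega> * \<Omega>^4)"
  have re: "(\<Sum>k<N. QT_term p lam al x f n i (Suc k)) = (\<Sum>k\<in>{1..N}. QT_term p lam al x f n i k)" for n i
  proof -
    have "(\<Sum>k\<in>Suc ` {..<N}. QT_term p lam al x f n i k) = (\<Sum>k<N. QT_term p lam al x f n i (Suc k))"
      by (subst sum.reindex) (auto simp: comp_def)
    then show ?thesis by (simp only: image_Suc_lessThan)
  qed
  have each: "(\<Sum>n\<in>{1..M}. (cmod (\<Sum>k<N. QT_term p lam al x f n i (Suc k)))^2) \<le> Bd" if "i \<in> {0,1}" for i
    unfolding re Bd_def by (rule mainb2) (use that in auto)
  have "(\<Sum>n\<in>{1..M}. \<Sum>i\<in>{0::nat,1}. (cmod (\<Sum>k<N. QT_term p lam al x f n i (Suc k)))^2)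
      = (\<Sum>i\<in>{0::nat,1}. \<Sum>n\<in>{1..M}. (cmod (\<Sum>k<N. QT_term p lam al x f n i (Suc k)))^2)"
    by (rule sum.swap)
  also have "\<dots> = (\<Sum>n\<in>{1..M}. (cmod (\<Sum>k<N. QT_term p lam al x f n 0 (Suc k)))^2)
      + (\<Sum>n\<in>{1..M}. (cmod (\<Sum>k<N. QT_term p lam al x f n 1 (Suc k)))^2)" by simp
  also have "\<dots> \<le> Bd + Bd" by (intro add_mono each) auto
  finally show ?thesis unfolding Bd_def by (simp add: algebra_simps)
qed

lemma QT_bound:
  "(\<Sum>n\<in>{1..M}. \<Sum>i\<in>{0::nat,1}. (cmod (QT p lam al x f n i))^2)
     \<le> 2 * (Coutx p \<Omega> * (Cax p \<Omega> * \<Omega>^2 + Cbx \<Omega> * \<Omega>^4)) * (norm_m f)^2"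
proof (rule LIMSEQ_le_const2)
  show "(\<lambda>N. \<Sum>n\<in>{1..M}. \<Sum>i\<in>{0::nat,1}. (cmod (\<Sum>k<N. QT_term p lam al x f n i (Suc k)))^2)
     \<longlonglongrightarrow> (\<Sum>n\<in>{1..M}. \<Sum>i\<in>{0::nat,1}. (cmod (QT p lam al x f n i))^2)"
  proof (intro tendsto_sum tendsto_power tendsto_norm)
    fix n i assume "n \<in> {1..M}" "i \<in> {0::nat,1}"
    then have "summable (\<lambda>k. QT_term p lam al x f n i (Suc k))" by (intro row_summable) auto
    then show "(\<lambda>N. \<Sum>k<N. QT_term p lam al x f n i (Suc k)) \<longlonglongrightarrow> QT p lam al x f n i"
      unfolding QT_def by (rule summable_LIMSEQ)
  qed
qed (use partial_bound in blast)

end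

theorem lemma3p3:
  fixes p :: nat and \<Omega> :: real
  assumes "\<Omega> > 0"
  shows "\<exists>C. \<forall>lam al x f.
           in_B p \<Omega> lam al \<longrightarrow> x \<in> {0..pi} \<longrightarrow> bounded_seq f \<longrightarrow>
             (\<forall>n\<ge>1. \<forall>i\<in>{0,1}. summable (\<lambda>k. QT_term p lam al x f n i (Suc k)))
           \<and> in_l2 (QT p lam al x f)
           \<and> norm_l2 (QT p lam al x f) \<le> C * norm_m f"
proof -
  define Q0 where "Q0 = Coutx p \<Omega> * (Cax p \<Omega> * \<Omega>^2 + Cbx \<Omega> * \<Omega>^4)"
  have Q0: "0 \<le> Q0" unfolding Q0_def using Cx_nn' assms by simp
  show ?thesis
  proof (rule exI[of _ "sqrt (2 * Q0)"], intro allI impI)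
    fix lam al x f
    assume B: "in_B p \<Omega> lam al" and xr: "x \<in> {0..pi}" and fb: "bounded_seq f"
    interpret stg p \<Omega> lam al x f by (intro stg.intro assms B xr fb)
    let ?g = "\<lambda>n. \<Sum>i\<in>{0::nat,1}. (cmod (QT p lam al x f (Suc n) i))^2"
    have part: "(\<Sum>n<M. ?g n) \<le> 2 * Q0 * (norm_m f)^2" for M
    proof -
      have "(\<Sum>n<M. ?g n) = (\<Sum>n\<in>Suc ` {..<M}. \<Sum>i\<in>{0::nat,1}. (cmod (QT p lam al x f n i))^2)"
        by (subst sum.reindex) (auto simp: comp_def)
      also have "\<dots> = (\<Sum>n\<in>{1..M}. \<Sum>i\<in>{0::nat,1}. (cmod (QT p lam al x f n i))^2)"
        by (simp only: image_Suc_lessThan)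
      also have "\<dots> \<le> 2 * Q0 * (norm_m f)^2" unfolding Q0_def by (rule QT_bound)
      finally show ?thesis .
    qed
    have g0: "0 \<le> ?g n" for n by (intro sum_nonneg) auto
    have sm: "summable ?g" by (rule summableI_nonneg_bounded[OF g0 part])
    have le: "(\<Sum>n. ?g n) \<le> 2 * Q0 * (norm_m f)^2" by (rule suminf_le_const[OF sm part])
    have "norm_l2 (QT p lam al x f) = sqrt (\<Sum>n. ?g n)" unfolding norm_l2_def ..
    also have "\<dots> \<le> sqrt (2 * Q0 * (norm_m f)^2)" using le by simp
    also have "\<dots> = sqrt (2 * Q0) * norm_m f" using F_nn by (simp add: real_sqrt_mult)
    finally have nb: "norm_l2 (QT p lam al x f) \<le> sqrt (2 * Q0) * norm_m f" .
    show "(\<forall>n\<ge>1. \<forall>i\<in>{0,1}. summable (\<lambda>k. QT_term p lam al x f n i (Suc k)))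
           \<and> in_l2 (QT p lam al x f)
           \<and> norm_l2 (QT p lam al x f) \<le> sqrt (2 * Q0) * norm_m f"
    proof (intro conjI)
      show "\<forall>n\<ge>1. \<forall>i\<in>{0,1}. summable (\<lambda>k. QT_term p lam al x f n i (Suc k))"
        by (intro allI impI ballI row_summable)
      show "in_l2 (QT p lam al x f)" unfolding in_l2_def by (rule sm)
      show "norm_l2 (QT p lam al x f) \<le> sqrt (2 * Q0) * norm_m f" by (rule nb)
    qed
  qed
qed


end
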